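(* Let $G$ be a graph with a tree decomposition $\mathcal{T}$ of width $w$, and let $\mathcal{F}=\{F_1,\dots,F_k\}$ be a set of forests, each a subgraph of $G$ consisting of vertex-disjoint rooted trees. Then there is a tree decomposition $\mathcal{T}'$ of $G$ of width $O(wk)$ such that for every tree $T$ of every forest in $\mathcal{F}$ and every vertex $v\in V(T)$, some bag of $\mathcal{T}'$ contains both $v$ and the root of $T$.
   Context: Standard tree decompositions: a tree whose nodes (bags) are vertex subsets such that every vertex lies in some bag, every edge has both endpoints in some bag, and the bags containing any fixed vertex form a connected subtree; width = maximum bag size minus one. *)

theory Defs
  imports Main
begin

definition graph :: "'a set \<Rightarrow> 'a set set \<Rightarrow> bool" where
  "graph V E \<longleftrightarrow> finite V \<and> (\<forall>e\<in>E. \<exists>x y. x \<in> V \<and> y \<in> V \<and> x \<noteq> y \<and> e = {x, y})"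

definition adj :: "'a set set \<Rightarrow> 'a \<Rightarrow> 'a \<Rightarrow> bool" where
  "adj E x y \<longleftrightarrow> {x, y} \<in> E"

definition reachable :: "'a set \<Rightarrow> 'a set set \<Rightarrow> 'a \<Rightarrow> 'a \<Rightarrow> bool" where
  "reachable V E x y \<longleftrightarrow> x \<in> V \<and> y \<in> V \<and> (adj E)\<^sup>*\<^sup>* x y"

definition connected_graph :: "'a set \<Rightarrow> 'a set set \<Rightarrow> bool" where
  "connected_graph V E \<longleftrightarrow> (\<forall>x\<in>V. \<forall>y\<in>V. reachable V E x y)"

definition is_cycle :: "'a set set \<Rightarrow> 'a list \<Rightarrow> bool" where
  "is_cycle E xs \<longleftrightarrow> length xs \<ge> 3 \<and> distinct xs \<and>
     (\<forall>i < length xs. {xs ! i, xs ! ((i + 1) mod length xs)} \<in> E)"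

definition forest :: "'a set \<Rightarrow> 'a set set \<Rightarrow> bool" where
  "forest V E \<longleftrightarrow> graph V E \<and> \<not> (\<exists>xs. is_cycle E xs)"

definition tree :: "'a set \<Rightarrow> 'a set set \<Rightarrow> bool" where
  "tree V E \<longleftrightarrow> forest V E \<and> V \<noteq> {} \<and> connected_graph V E"

definition induced_edges :: "'a set set \<Rightarrow> 'a set \<Rightarrow> 'a set set" where
  "induced_edges E S = {e \<in> E. e \<subseteq> S}"

definition tree_decomposition ::
  "'a set \<Rightarrow> 'a set set \<Rightarrow> 'b set \<Rightarrow> 'b set set \<Rightarrow> ('b \<Rightarrow> 'a set) \<Rightarrow> bool" where
  "tree_decomposition V E TV TE B \<longleftrightarrow>
     tree TV TE \<and>
     (\<forall>t\<in>TV. B t \<subseteq> V) \<and>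
     (\<forall>v\<in>V. \<exists>t\<in>TV. v \<in> B t) \<and>
     (\<forall>e\<in>E. \<exists>t\<in>TV. e \<subseteq> B t) \<and>
     (\<forall>v\<in>V. connected_graph {t\<in>TV. v \<in> B t} (induced_edges TE {t\<in>TV. v \<in> B t}))"

definition td_width :: "'b set \<Rightarrow> ('b \<Rightarrow> 'a set) \<Rightarrow> nat" where
  "td_width TV B = Max ((\<lambda>t. card (B t)) ` TV) - 1"

definition rooted_forest_subgraph ::
  "'a set \<Rightarrow> 'a set set \<Rightarrow> 'a set \<Rightarrow> 'a set set \<Rightarrow> 'a set \<Rightarrow> bool" where
  "rooted_forest_subgraph V E FV FE R \<longleftrightarrow>
     forest FV FE \<and> FV \<subseteq> V \<and> FE \<subseteq> E \<and> R \<subseteq> FV \<and>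
     (\<forall>v\<in>FV. \<exists>!r\<in>R. reachable FV FE v r)"

end

theory Submission
  imports Defs
begin

lemma adj_sym: "adj E x y \<Longrightarrow> adj E y x" by (simp add: adj_def insert_commute)

lemma rt_sym: "(adj E)\<^sup>*\<^sup>* x y \<Longrightarrow> (adj E)\<^sup>*\<^sup>* y x"
  by (induction rule: rtranclp.induct) (auto intro: converse_rtranclp_into_rtranclp adj_sym)

lemma reach_sym: "reachable V E x y \<Longrightarrow> reachable V E y x"
  by (auto simp: reachable_def intro: rt_sym)

lemma reach_trans: "reachable V E x y \<Longrightarrow> reachable V E y z \<Longrightarrow> reachable V E x z"
  by (auto simp: reachable_def intro: rtranclp_trans)

lemma reach_mono: "M \<subseteq> M' \<Longrightarrow> reachable M (induced_edges TE M) a b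
   \<Longrightarrow> reachable M' (induced_edges TE M') a b"
proof -
  assume s: "M \<subseteq> M'" and r: "reachable M (induced_edges TE M) a b"
  have "adj (induced_edges TE M) \<le> adj (induced_edges TE M')"
    using s by (auto simp: adj_def induced_edges_def)
  hence "(adj (induced_edges TE M))\<^sup>*\<^sup>* \<le> (adj (induced_edges TE M'))\<^sup>*\<^sup>*"
    by (rule rtranclp_mono)
  thus ?thesis using r s by (auto simp: reachable_def)
qed

lemma walk:
  assumes td: "tree_decomposition V E TV TE B"
    and rf: "rooted_forest_subgraph V E F FE' Rt"
    and hyp: "\<forall>u\<in>F. reachable F FE' u x \<longrightarrow> {t\<in>TV. u \<in> B t} \<subseteq> M"
    and xF: "x \<in> F"
  shows "(adj FE')\<^sup>*\<^sup>* u x \<Longrightarrow> u \<in> F \<Longrightarrow> t \<in> TV \<Longrightarrow> u \<in> B t \<Longrightarrow>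
     \<exists>t0\<in>TV. x \<in> B t0 \<and> reachable M (induced_edges TE M) t t0"
proof (induction u arbitrary: t rule: converse_rtranclp_induct)
  case base
  have "reachable F FE' x x" using xF by (simp add: reachable_def)
  hence "{t\<in>TV. x \<in> B t} \<subseteq> M" using hyp xF by blast
  hence "t \<in> M" using base by blast
  thus ?case using base by (auto simp: reachable_def)
next
  case (step u u')
  have gr: "graph F FE'" and sub: "F \<subseteq> V" "FE' \<subseteq> E"
    using rf unfolding rooted_forest_subgraph_def forest_def by simp_all
  have tdE: "\<forall>e\<in>E. \<exists>t\<in>TV. e \<subseteq> B t"
    and tdC: "\<forall>v\<in>V. connected_graph {t\<in>TV. v \<in> B t} (induced_edges TE {t\<in>TV. v \<in> B t})"
    using td unfolding tree_decomposition_def by simp_all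
  have e: "{u, u'} \<in> FE'" using step(1) by (simp add: adj_def)
  have "\<exists>a b. a \<in> F \<and> b \<in> F \<and> a \<noteq> b \<and> {u,u'} = {a,b}"
    using gr e unfolding graph_def by blast
  then obtain a b where ab: "a \<in> F" "b \<in> F" "{u,u'} = {a,b}" by blast
  have u'F: "u' \<in> F" using ab by (auto simp: doubleton_eq_iff)
  have "{u,u'} \<in> E" using e sub by blast
  then obtain t'' where t'': "t'' \<in> TV" "{u,u'} \<subseteq> B t''" using tdE by blast
  have uV: "u \<in> V" using step(4) sub by blast
  have cg: "connected_graph {t\<in>TV. u \<in> B t} (induced_edges TE {t\<in>TV. u \<in> B t})"
    using tdC uV by blast
  have tin: "t \<in> {t\<in>TV. u \<in> B t}" using step by blast
  have t''in: "t'' \<in> {t\<in>TV. u \<in> B t}" using t'' by blast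
  have r1: "reachable {t\<in>TV. u \<in> B t} (induced_edges TE {t\<in>TV. u \<in> B t}) t t''"
    using cg tin t''in unfolding connected_graph_def by blast
  have "(adj FE')\<^sup>*\<^sup>* u x" using step(1,2) by (rule converse_rtranclp_into_rtranclp)
  hence "reachable F FE' u x"
    using step(4) xF by (simp add: reachable_def)
  hence "{t\<in>TV. u \<in> B t} \<subseteq> M" using hyp step(4) by blast
  hence r2: "reachable M (induced_edges TE M) t t''" by (rule reach_mono[OF _ r1])
  obtain t0 where "t0\<in>TV" "x \<in> B t0" "reachable M (induced_edges TE M) t'' t0"
    using step.IH[OF u'F t''(1)] t'' by blast
  thus ?case using reach_trans[OF r2] by blast
qed


lemma td_new:
  assumes td: "tree_decomposition V E TV TE B"
    and rf: "\<forall>i<k. rooted_forest_subgraph V E (FV i) (FE i) (R i)"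
    and B'def: "\<And>t. B' t = B t \<union> {r. \<exists>i<k. r \<in> R i \<and> (\<exists>v\<in>B t \<inter> FV i. reachable (FV i) (FE i) v r)}"
  shows "tree_decomposition V E TV TE B'"
proof -
  have RV: "\<And>i r. i < k \<Longrightarrow> r \<in> R i \<Longrightarrow> r \<in> V"
    proof -
    fix i r assume "i < k" "r \<in> R i"
    hence "R i \<subseteq> FV i" "FV i \<subseteq> V" using rf by (simp_all add: rooted_forest_subgraph_def)
    thus "r \<in> V" using \<open>r \<in> R i\<close> by blast
  qed
  have c1: "\<forall>t\<in>TV. B' t \<subseteq> V" using td RV by (auto simp: B'def tree_decomposition_def)
  have c2: "\<forall>v\<in>V. \<exists>t\<in>TV. v \<in> B' t" using td by (auto simp: B'def tree_decomposition_def)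
  have c3: "\<forall>e\<in>E. \<exists>t\<in>TV. e \<subseteq> B' t" using td by (fastforce simp: B'def tree_decomposition_def)
  have c4: "connected_graph {t\<in>TV. x \<in> B' t} (induced_edges TE {t\<in>TV. x \<in> B' t})"
    if xV: "x \<in> V" for x
  proof -
    define M where "M = {t\<in>TV. x \<in> B' t}"
    define S where "S = {t\<in>TV. x \<in> B t}"
    have SM: "S \<subseteq> M" by (auto simp: S_def M_def B'def)
    have cS: "connected_graph S (induced_edges TE S)"
      using td xV by (auto simp: tree_decomposition_def S_def)
    have key: "\<exists>t0\<in>TV. x \<in> B t0 \<and> reachable M (induced_edges TE M) t1 t0" if t1: "t1 \<in> M" for t1
    proof (cases "x \<in> B t1")
      case True
      thus ?thesis using t1 by (auto simp: reachable_def M_def)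
    next
      case False
      then obtain i v where iv: "i < k" "x \<in> R i" "v \<in> B t1" "v \<in> FV i"
          "reachable (FV i) (FE i) v x"
        using t1 by (auto simp: M_def B'def)
      have rfi: "rooted_forest_subgraph V E (FV i) (FE i) (R i)" using rf iv by auto
      have xF: "x \<in> FV i" using rfi iv by (auto simp: rooted_forest_subgraph_def)
      have hyp: "\<forall>u\<in>FV i. reachable (FV i) (FE i) u x \<longrightarrow> {t\<in>TV. u \<in> B t} \<subseteq> M"
        using iv by (auto simp: M_def B'def)
      show ?thesis
        using walk[OF td rfi hyp xF, of v t1] iv t1
        by (auto simp: reachable_def M_def)
    qed
    show ?thesis unfolding connected_graph_def M_def[symmetric]
    proof (intro ballI)
      fix a b assume a: "a \<in> M" and b: "b \<in> M"
      obtain a0 where a0: "a0\<in>TV" "x \<in> B a0" "reachable M (induced_edges TE M) a a0"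
        using key[OF a] by auto
      obtain b0 where b0: "b0\<in>TV" "x \<in> B b0" "reachable M (induced_edges TE M) b b0"
        using key[OF b] by auto
      have "reachable S (induced_edges TE S) a0 b0"
        using cS a0 b0 by (auto simp: connected_graph_def S_def)
      hence ab0: "reachable M (induced_edges TE M) a0 b0" by (rule reach_mono[OF SM])
      show "reachable M (induced_edges TE M) a b"
        using reach_trans[OF a0(3) reach_trans[OF ab0 reach_sym[OF b0(3)]]] .
    qed
  qed
  show ?thesis using td c1 c2 c3 c4 by (auto simp: tree_decomposition_def)
qed

theorem lemma6p2:
  shows "\<exists>c::nat. \<forall>(V::nat set) E (TV::nat set) TE B w k
            (FV::nat \<Rightarrow> nat set) FE R.
     graph V E \<and> tree_decomposition V E TV TE B \<and> td_width TV B = w \<and>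
     (\<forall>i<k. rooted_forest_subgraph V E (FV i) (FE i) (R i)) \<longrightarrow>
     (\<exists>(TV'::nat set) TE' B'.
        tree_decomposition V E TV' TE' B' \<and>
        td_width TV' B' \<le> c * (w + 1) * (k + 1) \<and>
        (\<forall>i<k. \<forall>r\<in>R i. \<forall>v\<in>FV i. reachable (FV i) (FE i) v r \<longrightarrow>
            (\<exists>t\<in>TV'. v \<in> B' t \<and> r \<in> B' t)))"
proof (intro exI[of _ 1] allI impI, elim conjE)
  fix V :: "nat set" and E and TV :: "nat set" and TE B w k and FV :: "nat \<Rightarrow> nat set" and FE R
  assume gV: "graph V E" and td: "tree_decomposition V E TV TE B" and wd: "td_width TV B = w"
    and rf: "\<forall>i<k. rooted_forest_subgraph V E (FV i) (FE i) (R i)"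
  define B' where "B' t = B t \<union> {r. \<exists>i<k. r \<in> R i \<and> (\<exists>v\<in>B t \<inter> FV i. reachable (FV i) (FE i) v r)}" for t
  have td': "tree_decomposition V E TV TE B'" by (rule td_new[OF td rf B'_def])
  have fV: "finite V" using gV by (simp add: graph_def)
  have fTV: "finite TV" and neTV: "TV \<noteq> {}"
    using td by (auto simp: tree_decomposition_def tree_def forest_def graph_def)
  have BV: "\<And>t. t \<in> TV \<Longrightarrow> B t \<subseteq> V" using td by (auto simp: tree_decomposition_def)
  have cardB: "card (B t) \<le> w + 1" if t: "t \<in> TV" for t
  proof -
    have "card (B t) \<le> Max ((\<lambda>t. card (B t)) ` TV)" using fTV t by auto
    thus ?thesis using wd by (simp add: td_width_def)
  qed
  define f where "f i v = (THE r. r \<in> R i \<and> reachable (FV i) (FE i) v r)" for i v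
  have cardB': "card (B' t) \<le> (w+1)*(k+1)" if t: "t \<in> TV" for t
  proof -
    have fB: "finite (B t)" using BV[OF t] fV finite_subset by blast
    have sub: "{r. \<exists>i<k. r \<in> R i \<and> (\<exists>v\<in>B t \<inter> FV i. reachable (FV i) (FE i) v r)}
        \<subseteq> (\<Union>i\<in>{..<k}. f i ` B t)"
    proof
      fix r assume "r \<in> {r. \<exists>i<k. r \<in> R i \<and> (\<exists>v\<in>B t \<inter> FV i. reachable (FV i) (FE i) v r)}"
      then obtain i v where iv: "i<k" "r \<in> R i" "v \<in> B t" "v \<in> FV i" "reachable (FV i) (FE i) v r"
        by auto
      have "\<exists>!r\<in>R i. reachable (FV i) (FE i) v r"
        using rf iv by (auto simp: rooted_forest_subgraph_def)
      hence "f i v = r" unfolding f_def using iv by (auto intro: the_equality)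
      thus "r \<in> (\<Union>i\<in>{..<k}. f i ` B t)" using iv by auto
    qed
    have "card (\<Union>i\<in>{..<k}. f i ` B t) \<le> (\<Sum>i\<in>{..<k}. card (f i ` B t))"
      by (rule card_UN_le) simp
    also have "\<dots> \<le> (\<Sum>i\<in>{..<k}. w + 1)"
      by (rule sum_mono) (meson card_image_le[OF fB] cardB[OF t] le_trans)
    finally have c2: "card (\<Union>i\<in>{..<k}. f i ` B t) \<le> k * (w+1)" by simp
    have fU: "finite (\<Union>i\<in>{..<k}. f i ` B t)" using fB by auto
    have "card (B' t) \<le> card (B t) + card {r. \<exists>i<k. r \<in> R i \<and> (\<exists>v\<in>B t \<inter> FV i. reachable (FV i) (FE i) v r)}"
      unfolding B'_def by (rule card_Un_le)
    also have "\<dots> \<le> (w+1) + k*(w+1)"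
      using cardB[OF t] card_mono[OF fU sub] c2 by linarith
    finally show ?thesis by (simp add: algebra_simps)
  qed
  have wd': "td_width TV B' \<le> 1 * (w + 1) * (k + 1)"
  proof -
    have "Max ((\<lambda>t. card (B' t)) ` TV) \<le> (w+1)*(k+1)"
      using fTV neTV cardB' by auto
    thus ?thesis by (simp add: td_width_def)
  qed
  have cov: "\<forall>i<k. \<forall>r\<in>R i. \<forall>v\<in>FV i. reachable (FV i) (FE i) v r \<longrightarrow>
            (\<exists>t\<in>TV. v \<in> B' t \<and> r \<in> B' t)"
  proof (intro allI impI ballI)
    fix i r v assume i: "i<k" and r: "r \<in> R i" and v: "v \<in> FV i" and re: "reachable (FV i) (FE i) v r"
    have "v \<in> V" using rf i v by (auto simp: rooted_forest_subgraph_def)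
    then obtain t where "t\<in>TV" "v \<in> B t" using td by (auto simp: tree_decomposition_def)
    thus "\<exists>t\<in>TV. v \<in> B' t \<and> r \<in> B' t" using i r v re by (auto simp: B'_def)
  qed
  show "\<exists>(TV'::nat set) TE' B'.
        tree_decomposition V E TV' TE' B' \<and>
        td_width TV' B' \<le> 1 * (w + 1) * (k + 1) \<and>
        (\<forall>i<k. \<forall>r\<in>R i. \<forall>v\<in>FV i. reachable (FV i) (FE i) v r \<longrightarrow>
            (\<exists>t\<in>TV'. v \<in> B' t \<and> r \<in> B' t))"
    using td' wd' cov by blast
qed

end
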